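(* Let $N=\{1,\dots,n\}$ and let $F:2^N\to\mathbb{R}$ be quasi-submodular. For the sequences $(X_t),(Y_t)$ generated by the maximization procedure (described in the context), $X_t\subseteq Y_t$ for every $t$, i.e., the lattice $[X_t,Y_t]$ is nonempty at every iteration.
   Context: For $A\subseteq N$ and $i\in N$, write $A+i=A\cup\{i\}$, $A-i=A\setminus\{i\}$, and $F(i\mid A)=F(A+i)-F(A)$. $F$ is quasi-submodular if for all $X,Y\subseteq N$ both hold: $F(X\cap Y)\ge F(X)\Rightarrow F(Y)\ge F(X\cup Y)$, and $F(X\cap Y)>F(X)\Rightarrow F(Y)>F(X\cup Y)$. $[A,B]=\{U: A\subseteq U\subseteq B\}$. Maximization procedure: set $X_0=\emptyset$, $Y_0=N$; for $t=0,1,2,\dots$: let $U_t=\{u\in Y_t\setminus X_t: F(u\mid Y_t-u)>0\}$ and $X_{t+1}=X_t\cup U_t$; let $D_t=\{d\in Y_t\setminus X_t: F(d\mid X_t)<0\}$ and $Y_{t+1}=Y_t\setminus D_t$; if $X_{t+1}=X_t$ and $Y_{t+1}=Y_t$, stop and output $[X_t,Y_t]$; otherwise continue with $t+1$. *)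

theory Defs
  imports Complex_Main
begin

definition marg :: "('a set \<Rightarrow> real) \<Rightarrow> 'a \<Rightarrow> 'a set \<Rightarrow> real" where
  "marg F i A = F (insert i A) - F A"

definition quasi_submodular :: "'a set \<Rightarrow> ('a set \<Rightarrow> real) \<Rightarrow> bool" where
  "quasi_submodular N F \<longleftrightarrow>
     (\<forall>X Y. X \<subseteq> N \<longrightarrow> Y \<subseteq> N \<longrightarrow>
        (F (X \<inter> Y) \<ge> F X \<longrightarrow> F Y \<ge> F (X \<union> Y)) \<and>
        (F (X \<inter> Y) > F X \<longrightarrow> F Y > F (X \<union> Y)))"

definition max_step :: "('a set \<Rightarrow> real) \<Rightarrow> 'a set \<times> 'a set \<Rightarrow> 'a set \<times> 'a set" where
  "max_step F XY = (let X = fst XY; Y = snd XY;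
      U = {u \<in> Y - X. marg F u (Y - {u}) > 0};
      D = {d \<in> Y - X. marg F d X < 0}
    in (X \<union> U, Y - D))"

text \<open>(X_t, Y_t), starting from (empty, N). Once the procedure stops the pair is a fixed
  point of max_step, so iterating forever yields exactly the generated pairs, repeated.\<close>
definition max_proc :: "('a set \<Rightarrow> real) \<Rightarrow> 'a set \<Rightarrow> nat \<Rightarrow> 'a set \<times> 'a set" where
  "max_proc F N t = (max_step F ^^ t) ({}, N)"

end

theory Submission
  imports Defs
begin

lemma step_inv:
  assumes qs: "quasi_submodular N F" and XY: "X \<subseteq> Y" and YN: "Y \<subseteq> N"
  shows "fst (max_step F (X, Y)) \<subseteq> snd (max_step F (X, Y)) \<and> snd (max_step F (X, Y)) \<subseteq> N"
proof -
  have noboth: False if u: "u \<in> Y - X" and p: "marg F u (Y - {u}) > 0" and m: "marg F u X < 0" for u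
  proof -
    let ?A = "insert u X" and ?B = "Y - {u}"
    have "?A \<subseteq> N" "?B \<subseteq> N" using u XY YN by auto
    moreover have "?A \<inter> ?B = X" using u XY by auto
    moreover have "?A \<union> ?B = Y" using u XY by auto
    ultimately have "F X > F ?A \<longrightarrow> F ?B > F Y" using qs unfolding quasi_submodular_def by metis
    moreover have "F X > F ?A" using m by (simp add: marg_def)
    moreover have "insert u ?B = Y" using u by auto
    ultimately show False using p by (simp add: marg_def)
  qed
  show ?thesis unfolding max_step_def Let_def using XY YN noboth by auto
qed

theorem lemma5:
  fixes n :: nat and F :: "nat set \<Rightarrow> real" and t :: nat
  assumes "quasi_submodular {1..n} F"
  shows "fst (max_proc F {1..n} t) \<subseteq> snd (max_proc F {1..n} t)"
proof -
  have "fst (max_proc F {1..n} t) \<subseteq> snd (max_proc F {1..n} t) \<and> snd (max_proc F {1..n} t) \<subseteq> {1..n}"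
  proof (induction t)
    case 0 then show ?case by (simp add: max_proc_def)
  next
    case (Suc t)
    have e: "max_proc F {1..n} (Suc t) = max_step F (fst (max_proc F {1..n} t), snd (max_proc F {1..n} t))"
      by (simp add: max_proc_def)
    show ?case unfolding e using step_inv[OF assms] Suc by blast
  qed
  then show ?thesis by blast
qed

end
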